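(* Let $\Omega$ be a compact subset of $\mathbb{R}^d$ with a probability measure $\mu$, let $q\in[1,\infty)$, and let $X_N$ be a linear subspace of real-valued functions in $L_q(\Omega)$ defined at every point of $\Omega$. Let $\mathcal{C}_N=\{f=f_R+if_I: f_R,f_I\in X_N\}$. If $X_N\in\mathcal{M}(m,q,C_2,C_3)$, then $\mathcal{C}_N\in\mathcal{M}(m,q,C_22^{-q-1},C_32^{q+1})$.
   Context: $\|f\|_q=\left(\int_\Omega|f|^q\,d\mu\right)^{1/q}$. For a subspace $X$ of $L_q(\Omega)$, $X\in\mathcal{M}(m,q,C_2,C_3)$ (with positive constants $C_2\le C_3$) means that there exist points $\xi^1,\dots,\xi^m\in\Omega$ such that $C_2\|f\|_q^q\le\frac1m\sum_{j=1}^m|f(\xi^j)|^q\le C_3\|f\|_q^q$ for all $f\in X$. *)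

theory Defs
  imports "HOL-Analysis.Analysis" "HOL-Probability.Probability"
begin

definition real_fun_subspace :: "('a \<Rightarrow> real) set \<Rightarrow> bool" where
  "real_fun_subspace X \<longleftrightarrow>
     (\<lambda>x. 0) \<in> X \<and>
     (\<forall>f\<in>X. \<forall>g\<in>X. (\<lambda>x. f x + g x) \<in> X) \<and>
     (\<forall>c::real. \<forall>f\<in>X. (\<lambda>x. c * f x) \<in> X)"

definition Lq_pow :: "'a measure \<Rightarrow> real \<Rightarrow> ('a \<Rightarrow> 'b::real_normed_vector) \<Rightarrow> real" where
  "Lq_pow M q f = (\<integral>x. norm (f x) powr q \<partial>M)"

text \<open>Marcinkiewicz-type discretization class M(m,q,C2,C3): there are points
  xi^1..xi^m in Omega (here indexed by j < m) such that
  C2 ||f||_q^q <= (1/m) sum_j |f(xi^j)|^q <= C3 ||f||_q^q for all f in X.\<close>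
definition Mclass :: "'a measure \<Rightarrow> ('a \<Rightarrow> 'b::real_normed_vector) set \<Rightarrow> nat \<Rightarrow> real \<Rightarrow> real \<Rightarrow> real \<Rightarrow> bool" where
  "Mclass M X m q C2 C3 \<longleftrightarrow>
     (\<exists>\<xi>::nat \<Rightarrow> 'a. (\<forall>j<m. \<xi> j \<in> space M) \<and>
        (\<forall>f\<in>X. C2 * Lq_pow M q f \<le> (1 / real m) * (\<Sum>j<m. norm (f (\<xi> j)) powr q) \<and>
                 (1 / real m) * (\<Sum>j<m. norm (f (\<xi> j)) powr q) \<le> C3 * Lq_pow M q f))"

definition complexify :: "('a \<Rightarrow> real) set \<Rightarrow> ('a \<Rightarrow> complex) set" where
  "complexify X = {(\<lambda>x. complex_of_real (fR x) + \<i> * complex_of_real (fI x)) | fR fI. fR \<in> X \<and> fI \<in> X}"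

end

theory Submission
  imports Defs
begin

lemma P1: fixes a b q :: real assumes "0 \<le> q"
  shows "\<bar>a\<bar> powr q \<le> cmod (complex_of_real a + \<i> * complex_of_real b) powr q"
     "\<bar>b\<bar> powr q \<le> cmod (complex_of_real a + \<i> * complex_of_real b) powr q"
proof -
  have e: "complex_of_real a + \<i> * complex_of_real b = Complex a b" by (simp add: complex_eq_iff)
  show "\<bar>a\<bar> powr q \<le> cmod (complex_of_real a + \<i> * complex_of_real b) powr q"
    unfolding e using abs_Re_le_cmod[of "Complex a b"] assms by (intro powr_mono2) auto
  show "\<bar>b\<bar> powr q \<le> cmod (complex_of_real a + \<i> * complex_of_real b) powr q"
    unfolding e using abs_Im_le_cmod[of "Complex a b"] assms by (intro powr_mono2) auto
qed

lemma P2: fixes a b q :: real assumes "0 \<le> q"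
  shows "cmod (complex_of_real a + \<i> * complex_of_real b) powr q \<le> 2 powr q * (\<bar>a\<bar> powr q + \<bar>b\<bar> powr q)"
proof -
  have e: "complex_of_real a + \<i> * complex_of_real b = Complex a b" by (simp add: complex_eq_iff)
  have "cmod (Complex a b) \<le> \<bar>a\<bar> + \<bar>b\<bar>" using cmod_le[of "Complex a b"] by simp
  also have "\<dots> \<le> 2 * max \<bar>a\<bar> \<bar>b\<bar>" by simp
  finally have "cmod (Complex a b) powr q \<le> (2 * max \<bar>a\<bar> \<bar>b\<bar>) powr q"
    using assms by (intro powr_mono2) auto
  also have "\<dots> = 2 powr q * max \<bar>a\<bar> \<bar>b\<bar> powr q" by (simp add: powr_mult)
  also have "max \<bar>a\<bar> \<bar>b\<bar> powr q \<le> \<bar>a\<bar> powr q + \<bar>b\<bar> powr q"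
    by (cases "\<bar>a\<bar> \<le> \<bar>b\<bar>") (auto simp: max_def)
  finally show ?thesis unfolding e by simp
qed

theorem proposition2p1:
  fixes \<Omega> :: "'a::euclidean_space set"
    and M :: "'a measure"
    and X :: "('a \<Rightarrow> real) set"
    and m :: nat and q C2 C3 :: real
  assumes "compact \<Omega>"
    and "prob_space M"
    and "sets M = sets (restrict_space borel \<Omega>)"
    and "1 \<le> q"
    and "real_fun_subspace X"
    and "\<forall>f\<in>X. f \<in> borel_measurable M \<and> integrable M (\<lambda>x. \<bar>f x\<bar> powr q)"
    and "0 < C2" and "C2 \<le> C3"
    and "Mclass M X m q C2 C3"
  shows "Mclass M (complexify X) m q (C2 * 2 powr (- q - 1)) (C3 * 2 powr (q + 1))"
proof -
  have q0: "0 \<le> q" using assms(4) by simp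
  obtain \<xi> where \<xi>sp: "\<forall>j<m. \<xi> j \<in> space M" and
    H: "\<forall>f\<in>X. C2 * Lq_pow M q f \<le> (1 / real m) * (\<Sum>j<m. norm (f (\<xi> j)) powr q) \<and>
                 (1 / real m) * (\<Sum>j<m. norm (f (\<xi> j)) powr q) \<le> C3 * Lq_pow M q f"
    using assms(9) unfolding Mclass_def by blast
  define P where "P = (2::real) powr q"
  have P0: "P > 0" unfolding P_def by simp
  have e1: "2 powr (- q - 1) = 1 / (2 * P)" unfolding P_def
    by (simp add: powr_diff powr_minus divide_simps)
  have e2: "2 powr (q + 1) = 2 * P" unfolding P_def by (simp add: powr_add)
  show ?thesis unfolding Mclass_def
  proof (intro exI[of _ \<xi>] conjI ballI)
    show "\<forall>j<m. \<xi> j \<in> space M" by fact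
    fix f assume "f \<in> complexify X"
    then obtain a b where f: "f = (\<lambda>x. complex_of_real (a x) + \<i> * complex_of_real (b x))"
      and a: "a \<in> X" and b: "b \<in> X" unfolding complexify_def by blast
    define S :: "('a \<Rightarrow> real) \<Rightarrow> real" where
      "S g = (1 / real m) * (\<Sum>j<m. norm (g (\<xi> j)) powr q)" for g
    define Sc :: "('a \<Rightarrow> complex) \<Rightarrow> real" where
      "Sc g = (1 / real m) * (\<Sum>j<m. norm (g (\<xi> j)) powr q)" for g
    have Ha: "C2 * Lq_pow M q a \<le> S a" "S a \<le> C3 * Lq_pow M q a" using H a unfolding S_def by auto
    have Hb: "C2 * Lq_pow M q b \<le> S b" "S b \<le> C3 * Lq_pow M q b" using H b unfolding S_def by auto
    have am: "a \<in> borel_measurable M" and ai: "integrable M (\<lambda>x. \<bar>a x\<bar> powr q)"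
      and bm: "b \<in> borel_measurable M" and bi: "integrable M (\<lambda>x. \<bar>b x\<bar> powr q)"
      using assms(6) a b by auto
    have fm: "(\<lambda>x. norm (f x) powr q) \<in> borel_measurable M"
      unfolding f using am bm by measurable
    have gi: "integrable M (\<lambda>x. P * (\<bar>a x\<bar> powr q + \<bar>b x\<bar> powr q))"
      using ai bi by auto
    have fi: "integrable M (\<lambda>x. norm (f x) powr q)"
    proof (rule Bochner_Integration.integrable_bound[OF gi fm])
      show "AE x in M. norm (norm (f x) powr q) \<le> norm (P * (\<bar>a x\<bar> powr q + \<bar>b x\<bar> powr q))"
        unfolding f P_def using P2[OF q0] by (auto intro!: AE_I2)
    qed
    have La: "Lq_pow M q a \<le> Lq_pow M q f" unfolding Lq_pow_def
      using ai fi P1[OF q0] unfolding f by (intro integral_mono) auto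
    have Lb: "Lq_pow M q b \<le> Lq_pow M q f" unfolding Lq_pow_def
      using bi fi P1[OF q0] unfolding f by (intro integral_mono) auto
    have "Lq_pow M q f \<le> (\<integral>x. P * (\<bar>a x\<bar> powr q + \<bar>b x\<bar> powr q) \<partial>M)" unfolding Lq_pow_def
      using gi fi P2[OF q0] unfolding f P_def by (intro integral_mono) auto
    also have "\<dots> = P * (Lq_pow M q a + Lq_pow M q b)"
      unfolding Lq_pow_def using ai bi by simp
    finally have Lf: "Lq_pow M q f \<le> P * (Lq_pow M q a + Lq_pow M q b)" .
    have Lf0: "0 \<le> Lq_pow M q f" unfolding Lq_pow_def by simp
    have minv: "0 \<le> 1 / real m" by simp
    have Sa: "S a \<le> Sc f" unfolding S_def Sc_def f using P1[OF q0]
      by (intro mult_left_mono[OF _ minv] sum_mono) auto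
    have Sb: "S b \<le> Sc f" unfolding S_def Sc_def f using P1[OF q0]
      by (intro mult_left_mono[OF _ minv] sum_mono) auto
    have "Sc f \<le> (1 / real m) * (\<Sum>j<m. P * (\<bar>a (\<xi> j)\<bar> powr q + \<bar>b (\<xi> j)\<bar> powr q))"
      unfolding S_def Sc_def f P_def using P2[OF q0]
      by (intro mult_left_mono[OF _ minv] sum_mono) auto
    also have "\<dots> = P * (S a + S b)" unfolding S_def
      by (simp add: sum_distrib_left sum.distrib algebra_simps)
    finally have Sf: "Sc f \<le> P * (S a + S b)" .
    have "C2 * 2 powr (- q - 1) * Lq_pow M q f \<le> C2 / (2 * P) * (P * (Lq_pow M q a + Lq_pow M q b))"
      unfolding e1 using mult_left_mono[OF Lf, of "C2 / (2 * P)"] assms(7) P0 by simp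
    also have "\<dots> = (C2 * Lq_pow M q a + C2 * Lq_pow M q b) / 2" using P0 by (simp add: field_simps)
    also have "\<dots> \<le> Sc f" using Ha Hb Sa Sb by simp
    finally show "C2 * 2 powr (- q - 1) * Lq_pow M q f \<le> 1 / real m * (\<Sum>j<m. norm (f (\<xi> j)) powr q)"
      unfolding Sc_def .
    have "Sc f \<le> P * (C3 * Lq_pow M q a + C3 * Lq_pow M q b)"
      using Sf Ha Hb P0 by (smt (verit) mult_left_mono)
    also have "\<dots> \<le> P * (C3 * Lq_pow M q f + C3 * Lq_pow M q f)"
      using La Lb assms(7,8) P0 by (intro mult_left_mono add_mono) auto
    also have "\<dots> = C3 * 2 powr (q + 1) * Lq_pow M q f" unfolding e2 by simp
    finally show "1 / real m * (\<Sum>j<m. norm (f (\<xi> j)) powr q) \<le> C3 * 2 powr (q + 1) * Lq_pow M q f"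
      unfolding Sc_def .
  qed
qed

end
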